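(* Let $n>3$ and let $A=[A_1,\ldots,A_n]$ be an $n\times n\times n$ ASHM in which every line contains at most one entry equal to $-1$ (a near-permutation hypermatrix). Then $L(A)=1A_1+\cdots+nA_n$ has no constant row and no constant column.
   Context: An $n\times n$ alternating sign matrix (ASM) is an $n\times n$ matrix with entries in $\{0,1,-1\}$ such that in every row and column the nonzeros alternate in sign, beginning and ending with $+1$. An $n\times n\times n$ hypermatrix $A=[a_{ijk}]$ is written $A=[A_1,\ldots,A_n]$ with $A_k=[a_{ijk}]_{i,j}$; lines are obtained by fixing two of the three indices. $A$ is an ASHM if all entries lie in $\{0,\pm1\}$ and in every line the nonzeros alternate in sign beginning and ending with $+1$. A line of a matrix is constant if all its entries are equal. *)

theory Defs
  imports Main
begin

text \<open>Hypermatrices are functions nat => nat => nat => int, indexed by 1..n in each coordinate.\<close>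

definition alt_line :: "int list \<Rightarrow> bool" where
  "alt_line xs \<longleftrightarrow> (let ys = filter (\<lambda>x. x \<noteq> 0) xs in
     ys \<noteq> [] \<and> odd (length ys) \<and> (\<forall>i<length ys. ys ! i = (if even i then 1 else -1)))"

definition is_ASHM :: "nat \<Rightarrow> (nat \<Rightarrow> nat \<Rightarrow> nat \<Rightarrow> int) \<Rightarrow> bool" where
  "is_ASHM n a \<longleftrightarrow>
     (\<forall>i\<in>{1..n}. \<forall>j\<in>{1..n}. \<forall>k\<in>{1..n}. a i j k \<in> {0, 1, -1}) \<and>
     (\<forall>j\<in>{1..n}. \<forall>k\<in>{1..n}. alt_line (map (\<lambda>i. a i j k) [1..<n+1])) \<and>
     (\<forall>i\<in>{1..n}. \<forall>k\<in>{1..n}. alt_line (map (\<lambda>j. a i j k) [1..<n+1])) \<and>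
     (\<forall>i\<in>{1..n}. \<forall>j\<in>{1..n}. alt_line (map (\<lambda>k. a i j k) [1..<n+1]))"

definition near_perm :: "nat \<Rightarrow> (nat \<Rightarrow> nat \<Rightarrow> nat \<Rightarrow> int) \<Rightarrow> bool" where
  "near_perm n a \<longleftrightarrow>
     (\<forall>j\<in>{1..n}. \<forall>k\<in>{1..n}. card {i\<in>{1..n}. a i j k = -1} \<le> 1) \<and>
     (\<forall>i\<in>{1..n}. \<forall>k\<in>{1..n}. card {j\<in>{1..n}. a i j k = -1} \<le> 1) \<and>
     (\<forall>i\<in>{1..n}. \<forall>j\<in>{1..n}. card {k\<in>{1..n}. a i j k = -1} \<le> 1)"

definition Lmat :: "nat \<Rightarrow> (nat \<Rightarrow> nat \<Rightarrow> nat \<Rightarrow> int) \<Rightarrow> nat \<Rightarrow> nat \<Rightarrow> int" where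
  "Lmat n a i j = (\<Sum>k=1..n. int k * a i j k)"

definition const_row :: "nat \<Rightarrow> (nat \<Rightarrow> nat \<Rightarrow> int) \<Rightarrow> nat \<Rightarrow> bool" where
  "const_row n M i \<longleftrightarrow> (\<forall>j\<in>{1..n}. \<forall>j'\<in>{1..n}. M i j = M i j')"

definition const_col :: "nat \<Rightarrow> (nat \<Rightarrow> nat \<Rightarrow> int) \<Rightarrow> nat \<Rightarrow> bool" where
  "const_col n M j \<longleftrightarrow> (\<forall>i\<in>{1..n}. \<forall>i'\<in>{1..n}. M i j = M i' j)"

end

theory Submission
  imports Defs
begin

lemma sl_filter_nz: "sum_list (filter (\<lambda>x. x \<noteq> 0) xs) = sum_list (xs::int list)"
  by (induction xs) auto

lemma ys_take:
  assumes "\<forall>i<length ys. ys!i = (if even i then (1::int) else -1)"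
  shows "u \<le> length ys \<Longrightarrow> sum_list (take u ys) = (if even u then 0 else 1)"
proof (induction u)
  case 0 then show ?case by simp
next
  case (Suc u)
  then have "u < length ys" by simp
  then have "take (Suc u) ys = take u ys @ [ys!u]" by (simp add: take_Suc_conv_app_nth)
  then show ?case using Suc assms \<open>u < length ys\<close> by auto
qed

lemma alt_prefix_list:
  assumes "alt_line xs" shows "sum_list (take t xs) \<in> {0,1}"
proof -
  define P where "P = (\<lambda>x::int. x \<noteq> 0)"
  define ys where "ys = filter P xs"
  have alt: "\<forall>i<length ys. ys!i = (if even i then (1::int) else -1)"
    using assms unfolding alt_line_def ys_def P_def Let_def by auto
  have eqy: "ys = filter P (take t xs) @ filter P (drop t xs)"
    unfolding ys_def by (metis append_take_drop_id filter_append)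
  then have eq: "filter P (take t xs) = take (length (filter P (take t xs))) ys"
    by simp
  have le: "length (filter P (take t xs)) \<le> length ys"
    by (subst eqy) simp
  have "sum_list (take t xs) = sum_list (filter P (take t xs))"
    unfolding P_def by (simp add: sl_filter_nz)
  also have "\<dots> = sum_list (take (length (filter P (take t xs))) ys)" using eq by simp
  finally show ?thesis using ys_take[OF alt le] by auto
qed

lemma alt_sum_list:
  assumes "alt_line xs" shows "sum_list xs = 1"
proof -
  define ys where "ys = filter (\<lambda>x. x \<noteq> 0) xs"
  have alt: "\<forall>i<length ys. ys!i = (if even i then (1::int) else -1)" and od: "odd (length ys)"
    using assms unfolding alt_line_def ys_def Let_def by auto
  have "sum_list xs = sum_list ys" unfolding ys_def by (simp add: sl_filter_nz)
  also have "\<dots> = sum_list (take (length ys) ys)" by simp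
  also have "\<dots> = 1" using ys_take[OF alt, of "length ys"] od by simp
  finally show ?thesis .
qed

lemma sum_map_upt: "sum_list (map f [1..<t+1]) = (\<Sum>k=1..t. (f k::int))"
proof -
  have "set [1..<t+1] = {1..t}" by auto
  then show ?thesis by (metis sum_set_upt_conv_sum_list_nat)
qed

lemma alt_psum:
  assumes "alt_line (map f [1..<n+1])" "t \<le> n"
  shows "(\<Sum>k=1..t. (f k::int)) \<in> {0,1}"
proof -
  have "take t [1..<n+1] = [1..<1+t]" using assms(2) by (intro take_upt) simp
  then have "take t (map f [1..<n+1]) = map f [1..<t+1]"
    by (metis take_map add.commute)
  then show ?thesis by (metis alt_prefix_list assms(1) sum_map_upt)
qed

lemma alt_total:
  assumes "alt_line (map f [1..<n+1])"
  shows "(\<Sum>k=1..n. (f k::int)) = 1"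
  by (metis alt_sum_list assms sum_map_upt)

lemma single_one:
  assumes "\<forall>k\<in>{1..n}. g k \<in> {0,(1::int)}" "(\<Sum>k=1..n. g k) = 1"
  shows "\<exists>p\<in>{1..n}. g p = 1 \<and> (\<forall>k\<in>{1..n}. k \<noteq> p \<longrightarrow> g k = 0)
          \<and> (\<Sum>k=1..n. int k * g k) = int p"
proof -
  obtain p where p: "p \<in> {1..n}" "g p \<noteq> 0"
    using assms(2) by (metis (no_types, lifting) one_neq_zero sum.neutral)
  then have gp: "g p = 1" using assms(1) by auto
  have "(\<Sum>k=1..n. g k) = g p + (\<Sum>k\<in>{1..n}-{p}. g k)"
    using p(1) by (simp add: sum.remove)
  then have z: "(\<Sum>k\<in>{1..n}-{p}. g k) = 0" using assms(2) gp by simp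
  have nn: "\<forall>k\<in>{1..n}-{p}. g k \<ge> 0" using assms(1) by auto
  have zero: "\<forall>k\<in>{1..n}-{p}. g k = 0"
    using sum_nonneg_eq_0_iff[of "{1..n}-{p}" g] nn z by auto
  have "(\<Sum>k=1..n. int k * g k) = int p * g p + (\<Sum>k\<in>{1..n}-{p}. int k * g k)"
    using p(1) by (simp add: sum.remove)
  also have "(\<Sum>k\<in>{1..n}-{p}. int k * g k) = 0" using zero by simp
  finally show ?thesis using p(1) gp zero by auto
qed

lemma step:
  assumes x01: "\<forall>k\<in>{1..n}. x k \<in> {0,(1::int)}"
    and xy: "\<forall>k\<in>{1..n}. x k + y k \<in> {0,1}"
    and sx: "(\<Sum>k=1..n. x k) = 1" and sy: "(\<Sum>k=1..n. y k) = 1"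
    and w: "(\<Sum>k=1..n. int k * x k) = (\<Sum>k=1..n. int k * y k)"
  shows "\<exists>p\<in>{1..n}. y p = -1 \<and> (\<Sum>k=1..n. int k * x k) = int p"
proof -
  obtain p where p: "p \<in> {1..n}" "x p = 1" "\<forall>k\<in>{1..n}. k \<noteq> p \<longrightarrow> x k = 0"
    "(\<Sum>k=1..n. int k * x k) = int p"
    using single_one[OF x01 sx] by blast
  have "y p \<in> {-1, 0}" using xy p by force
  moreover have "y p \<noteq> 0"
  proof
    assume y0: "y p = 0"
    have "\<forall>k\<in>{1..n}. y k \<in> {0,1}"
    proof
      fix k assume k: "k \<in> {1..n}"
      show "y k \<in> {0,1}"
      proof (cases "k = p")
        case True then show ?thesis using y0 by simp
      next
        case False then show ?thesis using p(3) k xy by force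
      qed
    qed
    then obtain q where q: "q \<in> {1..n}" "y q = 1" "(\<Sum>k=1..n. int k * y k) = int q"
      using single_one[OF _ sy] by blast
    then have "q = p" using w p(4) by simp
    then show False using q(2) y0 by simp
  qed
  ultimately show ?thesis using p by auto
qed

lemma matrix_main:
  fixes M :: "nat \<Rightarrow> nat \<Rightarrow> int"
  assumes n: "n > 3"
    and rows: "\<forall>j\<in>{1..n}. alt_line (map (\<lambda>k. M j k) [1..<n+1])"
    and cols: "\<forall>k\<in>{1..n}. alt_line (map (\<lambda>j. M j k) [1..<n+1])"
    and neg: "\<forall>k\<in>{1..n}. card {j\<in>{1..n}. M j k = -1} \<le> 1"
    and W: "\<forall>j\<in>{1..n}. \<forall>j'\<in>{1..n}. (\<Sum>k=1..n. int k * M j k) = (\<Sum>k=1..n. int k * M j' k)"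
  shows False
proof -
  have r1: "\<forall>k\<in>{1..n}. M 1 k \<in> {0,1}"
    using cols alt_psum[of "\<lambda>j. M j k" n 1 for k] n by simp
  have r12: "\<forall>k\<in>{1..n}. M 1 k + M 2 k \<in> {0,1}"
  proof
    fix k assume "k \<in> {1..n}"
    then have "(\<Sum>j=1..2. M j k) \<in> {0,1}" using cols alt_psum[of "\<lambda>j. M j k" n 2] n by simp
    moreover have "(\<Sum>j=1..2. M j k) = M 1 k + M 2 k" by (simp add: numeral_2_eq_2)
    ultimately show "M 1 k + M 2 k \<in> {0,1}" by simp
  qed
  obtain p where p: "p \<in> {1..n}" "M 2 p = -1" "(\<Sum>k=1..n. int k * M 1 k) = int p"
    using step[OF r1 r12 alt_total alt_total] rows W n by fastforce
  have tot: "\<And>k. k \<in> {1..n} \<Longrightarrow> (\<Sum>j=1..n. M j k) = 1" using cols alt_total by blast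
  have split1: "\<And>k. (\<Sum>j=1..n. M j k) = (\<Sum>j=1..n-1. M j k) + M n k"
    using n by (metis Suc_diff_1 add.commute gr0I not_less_zero sum.nat_ivl_Suc' le_add1 plus_1_eq_Suc)
  have split2: "\<And>k. (\<Sum>j=1..n-1. M j k) = (\<Sum>j=1..n-2. M j k) + M (n-1) k"
  proof -
    fix k
    have "n - 1 = Suc (n-2)" using n by simp
    moreover have "1 \<le> Suc (n-2)" by simp
    ultimately show "(\<Sum>j=1..n-1. M j k) = (\<Sum>j=1..n-2. M j k) + M (n-1) k"
      by (metis sum.nat_ivl_Suc' add.commute)
  qed
  have rn: "\<forall>k\<in>{1..n}. M n k \<in> {0,1}"
  proof
    fix k assume k: "k \<in> {1..n}"
    have "(\<Sum>j=1..n-1. M j k) \<in> {0,1}" using cols k alt_psum[of "\<lambda>j. M j k" n "n-1"] by simp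
    then show "M n k \<in> {0,1}" using tot[OF k] split1[of k] by auto
  qed
  have rnn: "\<forall>k\<in>{1..n}. M n k + M (n-1) k \<in> {0,1}"
  proof
    fix k assume k: "k \<in> {1..n}"
    have "(\<Sum>j=1..n-2. M j k) \<in> {0,1}" using cols k alt_psum[of "\<lambda>j. M j k" n "n-2"] by simp
    then show "M n k + M (n-1) k \<in> {0,1}" using tot[OF k] split1[of k] split2[of k] by auto
  qed
  have nin: "n \<in> {1..n}" "n-1 \<in> {1..n}" "1 \<in> {1..n}" using n by auto
  obtain p' where p': "p' \<in> {1..n}" "M (n-1) p' = -1" "(\<Sum>k=1..n. int k * M n k) = int p'"
    using step[OF rn rnn alt_total alt_total] rows W nin by blast
  have "p = p'" using p(3) p'(3) W nin by force
  then have "{2, n-1} \<subseteq> {j\<in>{1..n}. M j p = -1}" using p p' n by auto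
  then have "card {2, n-1} \<le> card {j\<in>{1..n}. M j p = -1}" by (intro card_mono) auto
  moreover have "card {2::nat, n-1} = 2" using n by simp
  ultimately show False using neg p(1) by fastforce
qed

theorem mainTheorem6:
  fixes n :: nat and a :: "nat \<Rightarrow> nat \<Rightarrow> nat \<Rightarrow> int"
  assumes "n > 3" and "is_ASHM n a" and "near_perm n a"
  shows "(\<forall>i\<in>{1..n}. \<not> const_row n (Lmat n a) i) \<and>
         (\<forall>j\<in>{1..n}. \<not> const_col n (Lmat n a) j)"
proof (intro conjI ballI notI)
  fix i assume i: "i \<in> {1..n}" and c: "const_row n (Lmat n a) i"
  show False
  proof (rule matrix_main[of n "\<lambda>j k. a i j k"])
    show "n > 3" by fact
    show "\<forall>j\<in>{1..n}. alt_line (map (\<lambda>k. a i j k) [1..<n+1])"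
      using assms(2) i unfolding is_ASHM_def by blast
    show "\<forall>k\<in>{1..n}. alt_line (map (\<lambda>j. a i j k) [1..<n+1])"
      using assms(2) i unfolding is_ASHM_def by blast
    show "\<forall>k\<in>{1..n}. card {j\<in>{1..n}. a i j k = -1} \<le> 1"
      using assms(3) i unfolding near_perm_def by blast
    show "\<forall>j\<in>{1..n}. \<forall>j'\<in>{1..n}. (\<Sum>k=1..n. int k * a i j k) = (\<Sum>k=1..n. int k * a i j' k)"
      using c unfolding const_row_def Lmat_def by blast
  qed
next
  fix j assume j: "j \<in> {1..n}" and c: "const_col n (Lmat n a) j"
  show False
  proof (rule matrix_main[of n "\<lambda>i k. a i j k"])
    show "n > 3" by fact
    show "\<forall>i\<in>{1..n}. alt_line (map (\<lambda>k. a i j k) [1..<n+1])"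
      using assms(2) j unfolding is_ASHM_def by blast
    show "\<forall>k\<in>{1..n}. alt_line (map (\<lambda>i. a i j k) [1..<n+1])"
      using assms(2) j unfolding is_ASHM_def by blast
    show "\<forall>k\<in>{1..n}. card {i\<in>{1..n}. a i j k = -1} \<le> 1"
      using assms(3) j unfolding near_perm_def by blast
    show "\<forall>i\<in>{1..n}. \<forall>i'\<in>{1..n}. (\<Sum>k=1..n. int k * a i j k) = (\<Sum>k=1..n. int k * a i' j k)"
      using c unfolding const_col_def Lmat_def by blast
  qed
qed

end
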